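(* Let $d\ge 1$ and let $R=(r_{i,j})_{1\le i,j\le d}$ be a real $d\times d$ matrix with all entries strictly positive and $r_{i,i}=1$ for all $i$. Define $l:\mathbb{R}^d\to\mathbb{R}$ by $l(\theta)=\sum_{1\le i,j\le d}(\theta_i-r_{i,j}\theta_j)^2$. Then every minimizer $\xi$ of $l$ over the unit sphere $\{\theta\in\mathbb{R}^d:\|\theta\|=1\}$ (Euclidean norm) has all its components nonzero and of the same sign. *)

theory Defs
  imports "HOL-Analysis.Analysis"
begin

definition lfun :: "real^'n^'n \<Rightarrow> real^'n \<Rightarrow> real" where
  "lfun R \<theta> = (\<Sum>i\<in>UNIV. \<Sum>j\<in>UNIV. (\<theta> $ i - R $ i $ j * \<theta> $ j)^2)"

end

theory Submission
  imports Defs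
begin

definition bil :: "real^'n^'n \<Rightarrow> real^'n \<Rightarrow> real^'n \<Rightarrow> real" where
  "bil R x v = (\<Sum>i\<in>UNIV. \<Sum>j\<in>UNIV. (x $ i - R $ i $ j * x $ j) * (v $ i - R $ i $ j * v $ j))"

lemma lfun_expand:
  "lfun R (x + t *\<^sub>R v) = lfun R x + 2 * t * bil R x v + t^2 * lfun R v"
proof -
  have "\<And>i j. (x $ i + t * v $ i - R $ i $ j * (x $ j + t * v $ j))^2
     = (x $ i - R $ i $ j * x $ j)^2 + 2 * t * ((x $ i - R $ i $ j * x $ j) * (v $ i - R $ i $ j * v $ j))
       + t^2 * (v $ i - R $ i $ j * v $ j)^2"
    by (simp add: power2_eq_square algebra_simps)
  then show ?thesis
    unfolding lfun_def bil_def
    by (simp add: sum.distrib sum_distrib_left)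
qed

lemma lfun_scale: "lfun R (c *\<^sub>R x) = c^2 * lfun R x"
proof -
  have "\<And>i j. (c * x $ i - R $ i $ j * (c * x $ j))^2 = c^2 * (x $ i - R $ i $ j * x $ j)^2"
    by (simp add: power2_eq_square algebra_simps)
  then show ?thesis unfolding lfun_def by (simp add: sum_distrib_left)
qed

lemma term_le:
  fixes a b r :: real assumes "r > 0"
  shows "(\<bar>a\<bar> - r * \<bar>b\<bar>)^2 \<le> (a - r * b)^2"
proof -
  have "a * b \<le> \<bar>a\<bar> * \<bar>b\<bar>" by (metis abs_ge_self abs_mult)
  then have "r * (a * b) \<le> r * (\<bar>a\<bar> * \<bar>b\<bar>)" using assms by simp
  then show ?thesis by (simp add: power2_eq_square algebra_simps)
qed

lemma term_less:
  fixes a b r :: real assumes "r > 0" "a * b < 0"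
  shows "(\<bar>a\<bar> - r * \<bar>b\<bar>)^2 < (a - r * b)^2"
proof -
  have "a * b < \<bar>a\<bar> * \<bar>b\<bar>" using assms(2)
    by (metis abs_ge_zero abs_mult less_le_trans zero_le_mult_iff)
  then have "r * (a * b) < r * (\<bar>a\<bar> * \<bar>b\<bar>)" using assms by simp
  then show ?thesis by (simp add: power2_eq_square algebra_simps)
qed

lemma lfun_abs_le:
  assumes pos: "\<And>i j. R $ i $ j > 0"
  shows "lfun R (\<chi> i. \<bar>x $ i\<bar>) \<le> lfun R x"
  unfolding lfun_def
  by (intro sum_mono) (simp add: term_le pos)

lemma lfun_abs_less:
  assumes pos: "\<And>i j. R $ i $ j > 0" and neg: "x $ a * x $ b < 0"
  shows "lfun R (\<chi> i. \<bar>x $ i\<bar>) < lfun R x"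
  unfolding lfun_def
proof (rule sum_strict_mono_ex1)
  show "finite (UNIV :: 'a set)" by simp
  show "\<forall>i\<in>UNIV. (\<Sum>j\<in>UNIV. ((\<chi> i. \<bar>x $ i\<bar>) $ i - R $ i $ j * (\<chi> i. \<bar>x $ i\<bar>) $ j)\<^sup>2)
      \<le> (\<Sum>j\<in>UNIV. (x $ i - R $ i $ j * x $ j)\<^sup>2)"
    by (auto intro!: sum_mono simp: term_le pos)
  show "\<exists>i\<in>UNIV. (\<Sum>j\<in>UNIV. ((\<chi> i. \<bar>x $ i\<bar>) $ i - R $ i $ j * (\<chi> i. \<bar>x $ i\<bar>) $ j)\<^sup>2)
      < (\<Sum>j\<in>UNIV. (x $ i - R $ i $ j * x $ j)\<^sup>2)"
  proof (intro bexI[of _ a] UNIV_I)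
    show "(\<Sum>j\<in>UNIV. ((\<chi> i. \<bar>x $ i\<bar>) $ a - R $ a $ j * (\<chi> i. \<bar>x $ i\<bar>) $ j)\<^sup>2)
      < (\<Sum>j\<in>UNIV. (x $ a - R $ a $ j * x $ j)\<^sup>2)"
      by (rule sum_strict_mono_ex1) (auto simp: term_le pos intro!: exI[of _ b] term_less[OF pos neg])
  qed
qed

lemma norm_abs_vec: "norm (\<chi> i. \<bar>x $ i\<bar>) = norm (x :: real^'n)"
  by (simp add: norm_vec_def)

lemma bil_axis:
  assumes pos: "\<And>i j. R $ i $ j > 0" and nn: "\<And>i. \<eta> $ i \<ge> 0" and zk: "\<eta> $ k = 0"
    and nz: "\<eta> $ m \<noteq> 0"
  shows "bil R \<eta> (axis k 1) < 0"
proof -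
  have e1: "(\<Sum>j\<in>UNIV. (\<eta> $ k - R $ k $ j * \<eta> $ j) * (axis k 1 $ k - R $ k $ j * axis k (1::real) $ j))
      = - (\<Sum>j\<in>UNIV. R $ k $ j * \<eta> $ j)"
  proof -
    have "\<And>j. (\<eta> $ k - R $ k $ j * \<eta> $ j) * (axis k 1 $ k - R $ k $ j * axis k (1::real) $ j)
        = - (R $ k $ j * \<eta> $ j)"
      using zk by (auto simp: axis_def)
    then show ?thesis by (simp add: sum_negf)
  qed
  have "bil R \<eta> (axis k 1) = (\<Sum>i\<in>UNIV. \<Sum>j\<in>UNIV. (\<eta> $ i - R $ i $ j * \<eta> $ j) * (axis k 1 $ i - R $ i $ j * axis k (1::real) $ j))"
    by (simp add: bil_def)
  also have "\<dots> = (\<Sum>j\<in>UNIV. (\<eta> $ k - R $ k $ j * \<eta> $ j) * (axis k 1 $ k - R $ k $ j * axis k (1::real) $ j))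
      + (\<Sum>i\<in>UNIV-{k}. \<Sum>j\<in>UNIV. (\<eta> $ i - R $ i $ j * \<eta> $ j) * (axis k 1 $ i - R $ i $ j * axis k (1::real) $ j))"
    by (rule sum.remove) simp_all
  also have "(\<Sum>i\<in>UNIV-{k}. \<Sum>j\<in>UNIV. (\<eta> $ i - R $ i $ j * \<eta> $ j) * (axis k 1 $ i - R $ i $ j * axis k (1::real) $ j))
      = (\<Sum>i\<in>UNIV-{k}. (\<eta> $ i - R $ i $ k * \<eta> $ k) * (- R $ i $ k))"
  proof (rule sum.cong[OF refl])
    fix i assume "i \<in> UNIV - {k}"
    then have ik: "i \<noteq> k" by simp
    have "(\<Sum>j\<in>UNIV. (\<eta> $ i - R $ i $ j * \<eta> $ j) * (axis k 1 $ i - R $ i $ j * axis k (1::real) $ j))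
       = (\<Sum>j\<in>UNIV. if j = k then (\<eta> $ i - R $ i $ k * \<eta> $ k) * (- R $ i $ k) else 0)"
      by (rule sum.cong) (auto simp: axis_def ik)
    also have "\<dots> = (\<eta> $ i - R $ i $ k * \<eta> $ k) * (- R $ i $ k)" by simp
    finally show "(\<Sum>j\<in>UNIV. (\<eta> $ i - R $ i $ j * \<eta> $ j) * (axis k 1 $ i - R $ i $ j * axis k (1::real) $ j))
       = (\<eta> $ i - R $ i $ k * \<eta> $ k) * (- R $ i $ k)" .
  qed
  also have "(\<Sum>i\<in>UNIV-{k}. (\<eta> $ i - R $ i $ k * \<eta> $ k) * (- R $ i $ k)) \<le> 0"
    by (intro sum_nonpos) (simp add: zk, intro mult_nonneg_nonneg nn less_imp_le[OF pos])
  moreover have "(\<Sum>j\<in>UNIV. R $ k $ j * \<eta> $ j) > 0"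
  proof -
    have "0 < R $ k $ m * \<eta> $ m" using pos nn nz by (simp add: order_neq_le_trans)
    also have "\<dots> \<le> (\<Sum>j\<in>UNIV. R $ k $ j * \<eta> $ j)"
      by (rule member_le_sum) (auto intro: mult_nonneg_nonneg less_imp_le pos nn)
    finally show ?thesis .
  qed
  ultimately show ?thesis using e1 by linarith
qed

lemma nonneg_min_pos:
  assumes pos: "\<And>i j. R $ i $ j > 0" and nn: "\<And>i. \<eta> $ i \<ge> 0"
    and unit: "norm \<eta> = 1"
    and minim: "\<And>\<theta>. norm \<theta> = 1 \<Longrightarrow> lfun R \<eta> \<le> lfun R \<theta>"
  shows "\<eta> $ k > 0"
proof (rule ccontr)
  assume "\<not> \<eta> $ k > 0"
  then have zk: "\<eta> $ k = 0" using nn[of k] by simp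
  have "\<eta> \<noteq> 0" using unit by auto
  then obtain m where nz: "\<eta> $ m \<noteq> 0" by (auto simp: vec_eq_iff)
  define B where "B = bil R \<eta> (axis k 1)"
  have B: "B < 0" unfolding B_def by (rule bil_axis[OF pos nn zk nz])
  define a where "a = lfun R (axis k (1::real))"
  define L where "L = lfun R \<eta>"
  define t where "t = - B / (\<bar>a - L\<bar> + 1)"
  have t: "t > 0" using B unfolding t_def by (intro divide_pos_pos) auto
  define w where "w = \<eta> + t *\<^sub>R axis k (1::real)"
  have lw: "lfun R w = L + 2 * t * B + t^2 * a"
    unfolding w_def L_def B_def a_def by (rule lfun_expand)
  have "inner w w = inner \<eta> \<eta> + 2 * t * inner \<eta> (axis k 1) + t^2 * inner (axis k (1::real)) (axis k 1)"
    unfolding w_def by (simp add: inner_add_left inner_add_right power2_eq_square algebra_simps inner_commute)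
  also have "\<dots> = 1 + t^2"
    using unit zk by (simp add: inner_axis' power2_norm_eq_inner[symmetric] inner_axis)
  finally have nw2: "(norm w)^2 = 1 + t^2" by (simp add: power2_norm_eq_inner)
  have tp: "1 + t^2 > 0" by (simp add: add_pos_nonneg)
  have "norm w \<noteq> 0" using nw2 tp by auto
  then have nw: "norm w > 0" by simp
  have "norm ((1 / norm w) *\<^sub>R w) = 1" using nw by simp
  from minim[OF this] have "L \<le> (1 / norm w)^2 * lfun R w" by (simp add: lfun_scale L_def)
  moreover have "(1 / norm w)^2 = 1 / (1 + t^2)" by (simp add: power_divide nw2)
  ultimately have "L \<le> lfun R w / (1 + t^2)" by simp
  then have "L * (1 + t^2) \<le> lfun R w" using tp by (simp add: pos_le_divide_eq)
  then have "L * (1 + t^2) \<le> L + 2 * t * B + t^2 * a" using lw by simp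
  then have le: "0 \<le> t * (2 * B + t * (a - L))" by (simp add: power2_eq_square algebra_simps)
  have "t * (a - L) \<le> t * \<bar>a - L\<bar>" using t by (simp add: mult_left_mono)
  also have "\<dots> < t * (\<bar>a - L\<bar> + 1)" using t by simp
  also have "\<dots> = - B" unfolding t_def by simp
  finally have "2 * B + t * (a - L) < 0" using B by linarith
  then have "t * (2 * B + t * (a - L)) < 0" using t by (simp add: mult_pos_neg)
  then show False using le by linarith
qed

theorem mainTheorem2:
  fixes R :: "real^'n^'n" and \<xi> :: "real^'n"
  assumes pos: "\<And>i j. R $ i $ j > 0"
    and diag: "\<And>i. R $ i $ i = 1"
    and unit: "norm \<xi> = 1"
    and minim: "\<And>\<theta>. norm \<theta> = 1 \<Longrightarrow> lfun R \<xi> \<le> lfun R \<theta>"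
  shows "(\<forall>i. \<xi> $ i > 0) \<or> (\<forall>i. \<xi> $ i < 0)"
proof -
  define \<eta> where "\<eta> = (\<chi> i. \<bar>\<xi> $ i\<bar>)"
  have n\<eta>: "norm \<eta> = 1" unfolding \<eta>_def using unit norm_abs_vec by metis
  have l\<eta>: "lfun R \<eta> \<le> lfun R \<xi>" unfolding \<eta>_def by (rule lfun_abs_le[OF pos])
  have same: "\<xi> $ a * \<xi> $ b \<ge> 0" for a b
  proof (rule ccontr)
    assume "\<not> \<xi> $ a * \<xi> $ b \<ge> 0"
    then have "lfun R \<eta> < lfun R \<xi>" unfolding \<eta>_def by (intro lfun_abs_less[OF pos, of \<xi> a b]) simp
    with minim[OF n\<eta>] show False by simp
  qed
  have m\<eta>: "\<And>\<theta>. norm \<theta> = 1 \<Longrightarrow> lfun R \<eta> \<le> lfun R \<theta>"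
    using l\<eta> minim by (meson order_trans)
  have "\<eta> $ k > 0" for k
    by (rule nonneg_min_pos[OF pos _ n\<eta> m\<eta>]) (simp add: \<eta>_def)
  then have nz: "\<xi> $ k \<noteq> 0" for k unfolding \<eta>_def by simp
  fix k :: 'n
  show ?thesis
  proof (cases "\<xi> $ k > 0")
    case True
    then have "\<xi> $ i > 0" for i using same[of k i] nz[of i] by (simp add: zero_le_mult_iff)
    then show ?thesis by blast
  next
    case False
    then have "\<xi> $ k < 0" using nz[of k] by simp
    then have "\<xi> $ i < 0" for i using same[of k i] nz[of i] by (simp add: zero_le_mult_iff)
    then show ?thesis by blast
  qed
qed

end
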